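(* Let $d\ge2$ and let $K$ be a positive integer. For each $x\in[0,1]$ fix one binary expansion $x=\sum_{j\ge1}a_j^x2^{-j}$, $a_j^x\in\{0,1\}$, and define $\phi_K(x)=\sum_{j=1}^K2a_j^x3^{-d(j-1)}$. Suppose $f:[0,1]^d\to\mathbb{R}$ satisfies $|f(\mathbf x)-f(\mathbf y)|\le Q|\mathbf x-\mathbf y|_\infty^\beta$ for all $\mathbf x,\mathbf y\in[0,1]^d$, for some $0<\beta\le1$ and $Q\ge0$. Then there exists a function $g:\mathcal C\to\mathbb{R}$ on the Cantor set $\mathcal C$ such that $|g(x)-g(y)|\le2^\beta Q|x-y|^{\frac{\beta\log2}{d\log3}}$ for all $x,y\in\mathcal C$, $$\Big|f(\mathbf x)-g\Big(\sum_{p=1}^d3^{-p}\phi_K(x_p)\Big)\Big|\le Q\,2^{-\beta(K-4)}\qquad\text{for all }\mathbf x=(x_1,\ldots,x_d)\in[0,1]^d$$ (note $\sum_{p=1}^d3^{-p}\phi_K(x_p)\in\mathcal C$), and $\sup_{\mathbf x\in[0,1]^d}|f(\mathbf x)|=\sup_{z\in\mathcal C}|g(z)|$.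
   Context: $|\cdot|_\infty$ denotes the maximum norm on $\mathbb{R}^d$. The Cantor set $\mathcal C\subset[0,1]$ is the set of numbers having a ternary expansion using only the digits $0$ and $2$. *)

theory Defs
  imports "HOL-Analysis.Analysis"
begin

definition cantor_set :: "real set" where
  "cantor_set = {x. \<exists>c::nat \<Rightarrow> nat. (\<forall>j. c j \<in> {0, 2}) \<and>
                     (\<lambda>j. real (c j) / 3 ^ (Suc j)) sums x}"

definition unit_cube :: "nat \<Rightarrow> (nat \<Rightarrow> real) set" where
  "unit_cube d = PiE {1..d} (\<lambda>_. {0..1})"

definition dist_inf :: "nat \<Rightarrow> (nat \<Rightarrow> real) \<Rightarrow> (nat \<Rightarrow> real) \<Rightarrow> real" where
  "dist_inf d x y = Max ((\<lambda>p. \<bar>x p - y p\<bar>) ` {1..d})"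

text \<open>a x j (j \<ge> 1) is the j-th binary digit of the fixed expansion of x.\<close>
definition binary_expansion_choice :: "(real \<Rightarrow> nat \<Rightarrow> nat) \<Rightarrow> bool" where
  "binary_expansion_choice a \<longleftrightarrow>
     (\<forall>x\<in>{0..1}. (\<forall>j. a x j \<in> {0, 1}) \<and>
        (\<lambda>j. real (a x (Suc j)) / 2 ^ (Suc j)) sums x)"

definition phiK :: "nat \<Rightarrow> (real \<Rightarrow> nat \<Rightarrow> nat) \<Rightarrow> nat \<Rightarrow> real \<Rightarrow> real" where
  "phiK d a K x = (\<Sum>j=1..K. 2 * real (a x j) / 3 ^ (d * (j - 1)))"

end

theory Submission imports Defs begin

lemma geo_tail_bound:
  fixes e :: "nat \<Rightarrow> real" and r C :: real
  assumes r: "0 < r" "r < 1" and b: "\<And>k. \<bar>e k\<bar> \<le> C * r ^ k"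
  shows "summable e" "\<bar>suminf e\<bar> \<le> C / (1 - r)"
proof -
  have sg: "summable (\<lambda>k. C * r ^ k)"
    using r by (intro summable_mult summable_geometric) simp
  have sa: "summable (\<lambda>k. \<bar>e k\<bar>)"
    using b sg by (intro summable_rabs_comparison_test[of e "\<lambda>k. C * r^k"]) auto
  then show "summable e" by (rule summable_rabs_cancel)
  have "\<bar>suminf e\<bar> \<le> (\<Sum>k. \<bar>e k\<bar>)" using sa by (rule summable_rabs)
  also have "\<dots> \<le> (\<Sum>k. C * r ^ k)" using sa sg b by (intro suminf_le) auto
  also have "\<dots> = C * (\<Sum>k. r ^ k)" using r by (intro suminf_mult) (simp add: summable_geometric)
  also have "\<dots> = C / (1 - r)" using r by (simp add: suminf_geometric)
  finally show "\<bar>suminf e\<bar> \<le> C / (1 - r)" .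
qed

lemma bin_summable:
  assumes "\<forall>k. b k \<in> {0,1::nat}"
  shows "summable (\<lambda>k. real (b k) / 2 ^ Suc k)"
    and "0 \<le> (\<Sum>k. real (b k) / 2 ^ Suc k)" "(\<Sum>k. real (b k) / 2 ^ Suc k) \<le> 1"
proof -
  have bd: "\<bar>real (b k) / 2 ^ Suc k\<bar> \<le> (1/2) * (1/2) ^ k" for k
    using assms[rule_format, of k] by (auto simp: power_one_over)
  show s: "summable (\<lambda>k. real (b k) / 2 ^ Suc k)" using geo_tail_bound(1)[OF _ _ bd] by simp
  show "0 \<le> (\<Sum>k. real (b k) / 2 ^ Suc k)" using s by (intro suminf_nonneg) auto
  have "\<bar>\<Sum>k. real (b k) / 2 ^ Suc k\<bar> \<le> (1/2) / (1 - 1/2)" using geo_tail_bound(2)[OF _ _ bd] by simp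
  then show "(\<Sum>k. real (b k) / 2 ^ Suc k) \<le> 1" by simp
qed

lemma bin_close:
  assumes "\<forall>k. b k \<in> {0,1::nat}" "\<forall>k. b' k \<in> {0,1::nat}" "\<forall>k<N. b k = b' k"
  shows "\<bar>(\<Sum>k. real (b k) / 2 ^ Suc k) - (\<Sum>k. real (b' k) / 2 ^ Suc k)\<bar> \<le> 1 / 2 ^ N"
proof -
  define e where "e k = real (b k) / 2 ^ Suc k - real (b' k) / 2 ^ Suc k" for k
  have s1: "summable (\<lambda>k. real (b k) / 2 ^ Suc k)" and s2: "summable (\<lambda>k. real (b' k) / 2 ^ Suc k)"
    using bin_summable assms by auto
  have eq: "(\<Sum>k. real (b k) / 2 ^ Suc k) - (\<Sum>k. real (b' k) / 2 ^ Suc k) = suminf e"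
    unfolding e_def using s1 s2 by (simp add: suminf_diff)
  have se: "summable e" unfolding e_def using s1 s2 by (intro summable_diff)
  have "suminf e = (\<Sum>k. e (k + N)) + (\<Sum>i<N. e i)" using se by (rule suminf_split_initial_segment)
  also have "(\<Sum>i<N. e i) = 0" using assms(3) by (auto simp: e_def)
  finally have s: "suminf e = (\<Sum>k. e (k + N))" by simp
  have bd: "\<bar>e (k + N)\<bar> \<le> (1/2^Suc N) * (1/2) ^ k" for k
    using assms(1)[rule_format, of "k+N"] assms(2)[rule_format, of "k+N"]
    by (auto simp: e_def power_add power_one_over mult_ac)
  have "\<bar>\<Sum>k. e (k + N)\<bar> \<le> (1/2^Suc N) / (1 - 1/2)" by (rule geo_tail_bound(2)[OF _ _ bd]) auto
  then show ?thesis using eq s by simp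
qed

definition validc :: "(nat \<Rightarrow> nat) \<Rightarrow> bool" where "validc c \<longleftrightarrow> (\<forall>j. c j \<in> {0,2})"

lemma tern_summable: "validc c \<Longrightarrow> summable (\<lambda>j. real (c j) / 3 ^ Suc j)"
proof -
  assume v: "validc c"
  have bd: "\<bar>real (c k) / 3 ^ Suc k\<bar> \<le> (2/3) * (1/3) ^ k" for k
    using v unfolding validc_def
    by (cases "c k = 0") (auto simp: power_one_over dest: spec[of _ k])
  show ?thesis using geo_tail_bound(1)[OF _ _ bd] by simp
qed

lemma tern_sep:
  assumes v: "validc c" "validc c'" and m: "c m \<noteq> c' m" "\<forall>k<m. c k = c' k"
  shows "1 / 3 ^ Suc m \<le> \<bar>(\<Sum>k. real (c k) / 3 ^ Suc k) - (\<Sum>k. real (c' k) / 3 ^ Suc k)\<bar>"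
proof -
  define e where "e k = real (c k) / 3 ^ Suc k - real (c' k) / 3 ^ Suc k" for k
  have s1: "summable (\<lambda>k. real (c k) / 3 ^ Suc k)" and s2: "summable (\<lambda>k. real (c' k) / 3 ^ Suc k)"
    using tern_summable v by auto
  have eq: "(\<Sum>k. real (c k) / 3 ^ Suc k) - (\<Sum>k. real (c' k) / 3 ^ Suc k) = suminf e"
    unfolding e_def using s1 s2 by (simp add: suminf_diff)
  have se: "summable e" unfolding e_def using s1 s2 by (intro summable_diff)
  have "suminf e = (\<Sum>k. e (k + Suc m)) + (\<Sum>i<Suc m. e i)" using se by (rule suminf_split_initial_segment)
  also have "(\<Sum>i<Suc m. e i) = e m" using m(2) by (auto simp: e_def)
  finally have s: "suminf e = (\<Sum>k. e (k + Suc m)) + e m" by simp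
  have bd: "\<bar>e (k + Suc m)\<bar> \<le> (2/3^Suc (Suc m)) * (1/3) ^ k" for k
  proof -
    have "c (k + Suc m) = 0 \<or> c (k + Suc m) = 2" "c' (k + Suc m) = 0 \<or> c' (k + Suc m) = 2"
      using v unfolding validc_def by auto
    then show ?thesis by (auto simp: e_def power_add power_one_over mult_ac)
  qed
  have t: "\<bar>\<Sum>k. e (k + Suc m)\<bar> \<le> (2/3^Suc (Suc m)) / (1 - 1/3)" by (rule geo_tail_bound(2)[OF _ _ bd]) auto
  have em: "\<bar>e m\<bar> = 2 / 3 ^ Suc m"
  proof -
    have "c m = 0 \<or> c m = 2" "c' m = 0 \<or> c' m = 2"
      using v unfolding validc_def by auto
    then show ?thesis using m(1) by (auto simp: e_def)
  qed
  have "(2/3^Suc (Suc m)) / (1 - 1/3) = (1::real) / 3 ^ Suc m" by simp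
  then show ?thesis using eq s t em by linarith
qed


lemma tern_unique:
  assumes "validc c" "validc c'" "(\<lambda>j. real (c j) / 3 ^ Suc j) sums z" "(\<lambda>j. real (c' j) / 3 ^ Suc j) sums z"
  shows "c = c'"
proof (rule ccontr)
  assume "c \<noteq> c'"
  then have ex: "\<exists>m. c m \<noteq> c' m" by auto
  define m where "m = (LEAST m. c m \<noteq> c' m)"
  have m1: "c m \<noteq> c' m" unfolding m_def by (rule LeastI_ex[OF ex])
  have m2: "\<forall>k<m. c k = c' k" unfolding m_def using not_less_Least by blast
  have "1 / 3 ^ Suc m \<le> \<bar>(\<Sum>k. real (c k) / 3 ^ Suc k) - (\<Sum>k. real (c' k) / 3 ^ Suc k)\<bar>"
    by (rule tern_sep[OF assms(1,2) m1 m2])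
  also have "\<dots> = 0" using assms(3,4) sums_unique by (metis diff_self abs_zero)
  moreover have "0 < (1::real) / 3 ^ Suc m" by simp
  ultimately show False by linarith
qed

definition dig :: "real \<Rightarrow> nat \<Rightarrow> nat" where
  "dig z = (SOME c. validc c \<and> (\<lambda>j. real (c j) / 3 ^ Suc j) sums z)"

lemma cantor_iff: "z \<in> cantor_set \<longleftrightarrow> (\<exists>c. validc c \<and> (\<lambda>j. real (c j) / 3 ^ Suc j) sums z)"
  unfolding cantor_set_def validc_def by auto

lemma dig_prop: "z \<in> cantor_set \<Longrightarrow> validc (dig z) \<and> (\<lambda>j. real (dig z j) / 3 ^ Suc j) sums z"
proof -
  assume "z \<in> cantor_set"
  then obtain c where "validc c \<and> (\<lambda>j. real (c j) / 3 ^ Suc j) sums z" unfolding cantor_iff by blast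
  then show ?thesis unfolding dig_def
    by (rule someI[where P="\<lambda>c. validc c \<and> (\<lambda>j. real (c j) / 3 ^ Suc j) sums z"])
qed

lemma dig_eq: "validc c \<Longrightarrow> (\<lambda>j. real (c j) / 3 ^ Suc j) sums z \<Longrightarrow> dig z = c"
  using dig_prop[of z] cantor_iff[of z] tern_unique by blast

definition Tm :: "nat \<Rightarrow> real \<Rightarrow> nat \<Rightarrow> real" where
  "Tm d z = (\<lambda>p. if p \<in> {1..d} then (\<Sum>k. real (dig z (d*k + p - 1) div 2) / 2 ^ Suc k) else undefined)"

lemma validc_bits: "validc c \<Longrightarrow> \<forall>k. (\<lambda>k. c (g k) div 2) k \<in> {0,1}"
proof
  fix k assume "validc c"
  then have "c (g k) = 0 \<or> c (g k) = 2" unfolding validc_def by auto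
  then show "c (g k) div 2 \<in> {0,1}" by auto
qed

lemma Tm_cube: "z \<in> cantor_set \<Longrightarrow> Tm d z \<in> unit_cube d"
proof -
  assume z: "z \<in> cantor_set"
  have "\<forall>k. (\<lambda>k. dig z (d*k + p - 1) div 2) k \<in> {0,1}" for p
    using validc_bits[of "dig z" "\<lambda>k. d*k+p-1"] dig_prop[OF z] by simp
  from bin_summable(2,3)[OF this] show ?thesis
    unfolding unit_cube_def Tm_def PiE_iff extensional_def by simp
qed

lemma dist_inf_le:
  assumes "d \<ge> 1" "\<And>p. p \<in> {1..d} \<Longrightarrow> \<bar>x p - y p\<bar> \<le> B"
  shows "dist_inf d x y \<le> B"
  unfolding dist_inf_def using assms by (subst Max_le_iff) auto

lemma dist_inf_nonneg: "d \<ge> 1 \<Longrightarrow> 0 \<le> dist_inf d x y"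
  unfolding dist_inf_def by (rule order.trans[OF _ Max_ge[of _ "\<bar>x 1 - y 1\<bar>"]]) auto

lemma key_ineq:
  fixes d m :: nat and u :: real
  assumes d: "d \<ge> 1" and u: "1 / 3 ^ Suc m \<le> u"
  shows "1 / 2 ^ (m div d) \<le> 2 * u powr (ln 2 / (real d * ln 3))"
proof -
  define al where "al = ln 2 / (real d * ln 3)"
  have al0: "0 \<le> al" unfolding al_def by simp
  have "(1 / 3 ^ Suc m) powr al \<le> u powr al"
    by (rule powr_mono2[OF al0 _ u]) simp
  moreover have "(1 / (3::real) ^ Suc m) powr al = 2 powr (- (real (Suc m) / real d))"
  proof -
    have "(1 / (3::real) ^ Suc m) powr al = exp (al * ln (1 / 3 ^ Suc m))"
      by (simp add: powr_def)
    also have "ln (1 / (3::real) ^ Suc m) = - real (Suc m) * ln 3"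
      using ln_realpow[of 3 "Suc m"] by (simp add: ln_div algebra_simps del: power_Suc)
    also have "al * (- real (Suc m) * ln 3) = (- (real (Suc m) / real d)) * ln 2"
      unfolding al_def using d by (simp add: field_simps)
    finally show ?thesis by (simp add: powr_def)
  qed
  moreover have "1 / (2::real) ^ (m div d) \<le> 2 * 2 powr (- (real (Suc m) / real d))"
  proof -
    have "1 / (2::real) ^ (m div d) = 2 powr (- real (m div d))"
      by (simp add: powr_minus powr_realpow divide_inverse)
    also have "\<dots> \<le> 2 powr (1 - real (Suc m) / real d)"
    proof (rule powr_mono)
      have "m = d * (m div d) + m mod d" by simp
      moreover have "m mod d < d" using d by simp
      ultimately have "Suc m \<le> d + d * (m div d)" by linarith
      then have "real (Suc m) \<le> real d * (1 + real (m div d))"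
        by (metis of_nat_le_iff of_nat_add of_nat_mult distrib_left mult.right_neutral of_nat_1)
      then show "- real (m div d) \<le> 1 - real (Suc m) / real d"
        using d by (simp add: field_simps)
    qed simp
    also have "\<dots> = 2 * 2 powr (- (real (Suc m) / real d))"
      by (simp add: powr_diff powr_minus divide_inverse)
    finally show ?thesis .
  qed
  ultimately show ?thesis unfolding al_def by linarith
qed


lemma divmod_aux: "q < (d::nat) \<Longrightarrow> (d*k+q) div d = k \<and> (d*k+q) mod d = q"
  by simp

lemma idx_aux: "k < m div d \<Longrightarrow> 1 \<le> p \<Longrightarrow> p \<le> (d::nat) \<Longrightarrow> d*k+p-1 < m"
proof -
  assume a: "k < m div d" "1 \<le> p" "p \<le> d"
  have f1: "d * Suc k \<le> d * (m div d)" using a(1) by (intro mult_le_mono2) simp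
  have f2: "d * (m div d) \<le> m" by (metis div_mult_mod_eq le_add1 mult.commute)
  have f3: "d*k + p - 1 < d*k + d" using a by simp
  have f4: "d * Suc k = d*k + d" by simp
  show ?thesis using f1 f2 f3 f4 by linarith
qed

lemma Tm_holder:
  assumes d: "d \<ge> 1" and z: "z \<in> cantor_set" and z': "z' \<in> cantor_set"
  shows "dist_inf d (Tm d z) (Tm d z') \<le> 2 * \<bar>z - z'\<bar> powr (ln 2 / (real d * ln 3))"
proof (cases "dig z = dig z'")
  case True
  then have "z = z'" using dig_prop[OF z] dig_prop[OF z'] sums_unique by metis
  then have "dist_inf d (Tm d z) (Tm d z') \<le> 0" by (intro dist_inf_le[OF d]) simp
  moreover have "0 \<le> 2 * \<bar>z - z'\<bar> powr (ln 2 / (real d * ln 3))" by simp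
  ultimately show ?thesis by linarith
next
  case False
  then have ex: "\<exists>m. dig z m \<noteq> dig z' m" by auto
  define m where "m = (LEAST m. dig z m \<noteq> dig z' m)"
  have m1: "dig z m \<noteq> dig z' m" unfolding m_def by (rule LeastI_ex[OF ex])
  have m2: "\<forall>k<m. dig z k = dig z' k" unfolding m_def using not_less_Least by blast
  have sz: "(\<Sum>k. real (dig z k) / 3 ^ Suc k) = z" using dig_prop[OF z] sums_unique by metis
  have sz': "(\<Sum>k. real (dig z' k) / 3 ^ Suc k) = z'" using dig_prop[OF z'] sums_unique by metis
  have u: "1 / 3 ^ Suc m \<le> \<bar>z - z'\<bar>"
    using tern_sep[OF conjunct1[OF dig_prop[OF z]] conjunct1[OF dig_prop[OF z']] m1 m2] sz sz' by simp
  have "dist_inf d (Tm d z) (Tm d z') \<le> 1 / 2 ^ (m div d)"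
  proof (rule dist_inf_le[OF d])
    fix p assume p: "p \<in> {1..d}"
    have b1: "\<forall>k. (\<lambda>k. dig z (d*k + p - 1) div 2) k \<in> {0,1}"
      using validc_bits[of "dig z" "\<lambda>k. d*k+p-1"] dig_prop[OF z] by simp
    have b2: "\<forall>k. (\<lambda>k. dig z' (d*k + p - 1) div 2) k \<in> {0,1}"
      using validc_bits[of "dig z'" "\<lambda>k. d*k+p-1"] dig_prop[OF z'] by simp
    have b3: "\<forall>k<m div d. (\<lambda>k. dig z (d*k + p - 1) div 2) k = (\<lambda>k. dig z' (d*k + p - 1) div 2) k"
      using m2 idx_aux p by auto
    show "\<bar>Tm d z p - Tm d z' p\<bar> \<le> 1 / 2 ^ (m div d)"
      using bin_close[OF b1 b2 b3] p unfolding Tm_def by simp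
  qed
  also have "\<dots> \<le> 2 * \<bar>z - z'\<bar> powr (ln 2 / (real d * ln 3))"
    by (rule key_ineq[OF d u])
  finally show ?thesis .
qed

lemma sum_lessThan_add_nat: "(\<Sum>i<n+m. F i) = (\<Sum>i<n. F i) + (\<Sum>q<m. F (n+q::nat))"
  by (induct m) (auto simp: add_ac)

lemma sum_group: "(\<Sum>i<d*K. F i) = (\<Sum>j<K. \<Sum>q<d. F (d*j+q::nat))"
proof (induct K)
  case (Suc K)
  have "(\<Sum>i<d*Suc K. F i) = (\<Sum>i<d*K+d. F i)" by (simp add: add.commute)
  also have "\<dots> = (\<Sum>i<d*K. F i) + (\<Sum>q<d. F (d*K+q))" by (rule sum_lessThan_add_nat)
  finally show ?case using Suc by simp
qed simp

lemma a_bit: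
  assumes "binary_expansion_choice a" "x \<in> unit_cube d" "p \<in> {1..d}"
  shows "a (x p) j \<in> {0,1}"
proof -
  have "x p \<in> {0..1}" using assms(2,3) unfolding unit_cube_def by (auto simp: PiE_iff)
  then show ?thesis using assms(1) unfolding binary_expansion_choice_def by auto
qed

lemma a_sum:
  assumes "binary_expansion_choice a" "x \<in> unit_cube d" "p \<in> {1..d}"
  shows "(\<Sum>k. real (a (x p) (Suc k)) / 2 ^ Suc k) = x p"
proof -
  have "x p \<in> {0..1}" using assms(2,3) unfolding unit_cube_def by (auto simp: PiE_iff)
  then show ?thesis using assms(1) sums_unique unfolding binary_expansion_choice_def by metis
qed

lemma Tm_surj:
  assumes d: "d \<ge> 1" and a: "binary_expansion_choice a" and x: "x \<in> unit_cube d"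
  shows "\<exists>z\<in>cantor_set. Tm d z = x"
proof -
  define c where "c i = 2 * a (x (i mod d + 1)) (i div d + 1)" for i
  have v: "validc c" unfolding validc_def c_def
  proof
    fix i
    have "i mod d + 1 \<in> {1..d}" using d by (simp add: Suc_leI)
    then have "a (x (i mod d + 1)) (i div d + 1) \<in> {0,1}" using a_bit[OF a x] by blast
    then show "2 * a (x (i mod d + 1)) (i div d + 1) \<in> {0,2}" by auto
  qed
  define z where "z = (\<Sum>j. real (c j) / 3 ^ Suc j)"
  have sz: "(\<lambda>j. real (c j) / 3 ^ Suc j) sums z" unfolding z_def
    using tern_summable[OF v] by (simp add: summable_sums)
  have zc: "z \<in> cantor_set" using v sz cantor_iff by blast
  have dz: "dig z = c" by (rule dig_eq[OF v sz])
  have "Tm d z = x"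
  proof
    fix p
    show "Tm d z p = x p"
    proof (cases "p \<in> {1..d}")
      case True
      then have pd: "p - 1 < d" "p - 1 + 1 = p" by auto
      have "\<And>k. c (d*k + p - 1) div 2 = a (x p) (Suc k)"
        unfolding c_def using divmod_aux[OF pd(1)] pd(2) True
        by (metis Nat.add_diff_assoc One_nat_def Suc_eq_plus1 atLeastAtMost_iff nonzero_mult_div_cancel_left zero_neq_numeral)
      then show ?thesis using True a_sum[OF a x True] unfolding Tm_def dz by simp
    next
      case False
      then show ?thesis using x unfolding Tm_def unit_cube_def by (auto simp: PiE_iff extensional_def)
    qed
  qed
  then show ?thesis using zc by blast
qed


lemma Tm_approx:
  fixes K :: nat
  assumes d: "d \<ge> 1" and a: "binary_expansion_choice a" and x: "x \<in> unit_cube d"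
  defines "z \<equiv> (\<Sum>p=1..d. phiK d a K (x p) / 3 ^ p)"
  shows "z \<in> cantor_set \<and> dist_inf d x (Tm d z) \<le> 1 / 2 ^ K"
proof -
  define c where "c i = (if i div d < K then 2 * a (x (i mod d + 1)) (i div d + 1) else 0)" for i
  have v: "validc c" unfolding validc_def c_def
  proof
    fix i
    have "i mod d + 1 \<in> {1..d}" using d by (simp add: Suc_leI)
    then have "a (x (i mod d + 1)) (i div d + 1) \<in> {0,1}" using a_bit[OF a x] by blast
    then show "(if i div d < K then 2 * a (x (i mod d + 1)) (i div d + 1) else 0) \<in> {0,2}" by auto
  qed
  have zero: "c i = 0" if "i \<notin> {..<d*K}" for i
  proof -
    have "d*K \<le> i" using that by simp
    then have "d*K div d \<le> i div d" by (rule div_le_mono)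
    then show ?thesis using d unfolding c_def by simp
  qed
  have s1: "(\<lambda>i. real (c i) / 3 ^ Suc i) sums (\<Sum>i<d*K. real (c i) / 3 ^ Suc i)"
    by (rule sums_finite) (auto simp: zero)
  have "(\<Sum>i<d*K. real (c i) / 3 ^ Suc i) = (\<Sum>j<K. \<Sum>q<d. real (c (d*j+q)) / 3 ^ Suc (d*j+q))"
    by (rule sum_group)
  also have "\<dots> = (\<Sum>j<K. \<Sum>q<d. 2 * real (a (x (Suc q)) (Suc j)) / 3 ^ (d*j) / 3 ^ Suc q)"
  proof (intro sum.cong refl)
    fix j q assume j: "j \<in> {..<K}" and q: "q \<in> {..<d}"
    have "c (d*j+q) = 2 * a (x (Suc q)) (Suc j)" using divmod_aux[of q d j] j q unfolding c_def by simp
    moreover have "(3::real) ^ Suc (d*j+q) = 3 ^ (d*j) * 3 ^ Suc q" by (simp add: power_add)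
    ultimately show "real (c (d*j+q)) / 3 ^ Suc (d*j+q) = 2 * real (a (x (Suc q)) (Suc j)) / 3 ^ (d*j) / 3 ^ Suc q"
      by simp
  qed
  also have "\<dots> = (\<Sum>q<d. \<Sum>j<K. 2 * real (a (x (Suc q)) (Suc j)) / 3 ^ (d*j) / 3 ^ Suc q)"
    by (rule sum.swap)
  also have "\<dots> = z"
    unfolding z_def phiK_def
    by (simp add: sum.atLeast1_atMost_eq sum_divide_distrib)
  finally have sz: "(\<lambda>i. real (c i) / 3 ^ Suc i) sums z" using s1 by simp
  have zc: "z \<in> cantor_set" using v sz cantor_iff by blast
  have dz: "dig z = c" by (rule dig_eq[OF v sz])
  have "dist_inf d x (Tm d z) \<le> 1 / 2 ^ K"
  proof (rule dist_inf_le[OF d])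
    fix p assume p: "p \<in> {1..d}"
    then have pd: "p - 1 < d" "p - 1 + 1 = p" by auto
    have ck: "c (d*k + p - 1) div 2 = (if k < K then a (x p) (Suc k) else 0)" for k
    proof -
      have "d*k + p - 1 = d*k + (p - 1)" using p by simp
      then show ?thesis unfolding c_def using divmod_aux[OF pd(1), of k] pd(2) by simp
    qed
    have b1: "\<forall>k. (\<lambda>k. a (x p) (Suc k)) k \<in> {0,1}" using a_bit[OF a x p] by simp
    have b2: "\<forall>k. (\<lambda>k. if k < K then a (x p) (Suc k) else 0) k \<in> {0,1}" using a_bit[OF a x p] by simp
    have b3: "\<forall>k<K. (\<lambda>k. a (x p) (Suc k)) k = (\<lambda>k. if k < K then a (x p) (Suc k) else 0) k" by simp
    show "\<bar>x p - Tm d z p\<bar> \<le> 1 / 2 ^ K"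
      using bin_close[OF b1 b2 b3] p a_sum[OF a x p] unfolding Tm_def dz ck by simp
  qed
  then show ?thesis using zc by blast
qed


theorem lemma4:
  fixes d K :: nat and a :: "real \<Rightarrow> nat \<Rightarrow> nat"
    and f :: "(nat \<Rightarrow> real) \<Rightarrow> real" and \<beta> Q :: real
  assumes "d \<ge> 2" and "K \<ge> 1"
    and "binary_expansion_choice a"
    and "0 < \<beta>" and "\<beta> \<le> 1" and "Q \<ge> 0"
    and "\<forall>x\<in>unit_cube d. \<forall>y\<in>unit_cube d. \<bar>f x - f y\<bar> \<le> Q * dist_inf d x y powr \<beta>"
  shows "\<exists>g :: real \<Rightarrow> real.
     (\<forall>x\<in>cantor_set. \<forall>y\<in>cantor_set.
        \<bar>g x - g y\<bar> \<le> 2 powr \<beta> * Q * \<bar>x - y\<bar> powr (\<beta> * ln 2 / (real d * ln 3))) \<and>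
     (\<forall>x\<in>unit_cube d. (\<Sum>p=1..d. phiK d a K (x p) / 3 ^ p) \<in> cantor_set) \<and>
     (\<forall>x\<in>unit_cube d.
        \<bar>f x - g (\<Sum>p=1..d. phiK d a K (x p) / 3 ^ p)\<bar> \<le> Q * 2 powr (- \<beta> * (real K - 4))) \<and>
     (SUP x\<in>unit_cube d. \<bar>f x\<bar>) = (SUP z\<in>cantor_set. \<bar>g z\<bar>)"
proof -
  have d: "d \<ge> 1" using assms(1) by simp
  have hol: "\<bar>f x - f y\<bar> \<le> Q * dist_inf d x y powr \<beta>" if "x \<in> unit_cube d" "y \<in> unit_cube d" for x y
    using assms(7) that by blast
  define g where "g z = f (Tm d z)" for z
  have P1: "\<bar>g x - g y\<bar> \<le> 2 powr \<beta> * Q * \<bar>x - y\<bar> powr (\<beta> * ln 2 / (real d * ln 3))"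
    if x: "x \<in> cantor_set" and y: "y \<in> cantor_set" for x y
  proof -
    define al where "al = ln 2 / (real d * ln 3)"
    have "\<bar>g x - g y\<bar> \<le> Q * dist_inf d (Tm d x) (Tm d y) powr \<beta>"
      unfolding g_def using hol Tm_cube x y by blast
    also have "\<dots> \<le> Q * (2 * \<bar>x - y\<bar> powr al) powr \<beta>"
      using Tm_holder[OF d x y] dist_inf_nonneg[OF d] assms(4,6) unfolding al_def
      by (intro mult_left_mono powr_mono2) auto
    also have "(2 * \<bar>x - y\<bar> powr al) powr \<beta> = 2 powr \<beta> * \<bar>x - y\<bar> powr (al * \<beta>)"
      by (simp add: powr_mult powr_powr)
    also have "al * \<beta> = \<beta> * ln 2 / (real d * ln 3)" unfolding al_def by simp
    finally show ?thesis by (simp add: mult_ac)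
  qed
  have P3: "\<bar>f x - g (\<Sum>p=1..d. phiK d a K (x p) / 3 ^ p)\<bar> \<le> Q * 2 powr (- \<beta> * (real K - 4))"
    if x: "x \<in> unit_cube d" for x
  proof -
    define z where "z = (\<Sum>p=1..d. phiK d a K (x p) / 3 ^ p)"
    have za: "z \<in> cantor_set" "dist_inf d x (Tm d z) \<le> 1 / 2 ^ K"
      using Tm_approx[OF d assms(3) x, of K] unfolding z_def by auto
    have "\<bar>f x - g z\<bar> \<le> Q * dist_inf d x (Tm d z) powr \<beta>"
      unfolding g_def using hol Tm_cube x za(1) by blast
    also have "\<dots> \<le> Q * (1 / 2 ^ K) powr \<beta>"
      using za(2) dist_inf_nonneg[OF d] assms(4,6)
      by (intro mult_left_mono powr_mono2) auto
    also have "(1 / (2::real) ^ K) powr \<beta> = 2 powr (- real K * \<beta>)"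
    proof -
      have "1 / (2::real) ^ K = 2 powr (- real K)" by (simp add: powr_minus powr_realpow divide_inverse)
      then show ?thesis by (simp add: powr_powr)
    qed
    also have "Q * 2 powr (- real K * \<beta>) \<le> Q * 2 powr (- \<beta> * (real K - 4))"
      using assms(4,6) by (intro mult_left_mono powr_mono) (auto simp: algebra_simps)
    finally show ?thesis unfolding z_def .
  qed
  have img: "Tm d ` cantor_set = unit_cube d"
    using Tm_cube Tm_surj[OF d assms(3)] by blast
  have P4: "(SUP x\<in>unit_cube d. \<bar>f x\<bar>) = (SUP z\<in>cantor_set. \<bar>g z\<bar>)"
    unfolding g_def img[symmetric] image_image by simp
  show ?thesis
    using P1 P3 P4 Tm_approx[OF d assms(3)] by blast
qed

end
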